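(* Let $H$ be a graph, $\Delta$ a positive integer, and $C$ a removable cycle in $H$ with $\Delta(C,H)\le\Delta$. Let $\varphi$ be a partial proper $\Delta$-coloring of $H$ such that $\varphi(v)=\perp$ for all $v\in V(C)$. Then there exists a partial proper $\Delta$-coloring $\varphi'$ of $H$ such that $\varphi'(u)\ne\perp$ for all $u\in V(C)$ and $\varphi'(u)=\varphi(u)$ for all $u\in V(H)\setminus V(C)$.
   Context: A simple cycle in a graph $H$ is a sequence $(v_1,\dots,v_k)$ of $k>2$ distinct vertices with $\{v_i,v_{i+1}\}\in E(H)$ for $1\le i<k$ and $\{v_k,v_1\}\in E(H)$; $V(C)$ denotes its vertex set. $H[U]$ is the subgraph induced by $U$, and $d(v,H)$ is the degree of $v$ in $H$. For a simple cycle $C$, $\Delta(C,H)=\max_{v\in V(C)} d(v,H)$. A simple cycle $C$ in $H$ is removable if $H[V(C)]$ is neither isomorphic to a complete graph nor to a cycle graph of odd length. A partial proper $k$-coloring of $H$ is a map $\varphi:V(H)\to\{1,\dots,k\}\cup\{\perp\}$ whose restriction to $U=\{v:\varphi(v)\ne\perp\}$ is a proper $k$-coloring of $H[U]$. *)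

theory Defs
  imports Main
begin

definition graph :: "'a set \<Rightarrow> ('a \<Rightarrow> 'a \<Rightarrow> bool) \<Rightarrow> bool" where
  "graph V E \<longleftrightarrow> finite V \<and> (\<forall>x y. E x y \<longrightarrow> x \<in> V \<and> y \<in> V)
     \<and> (\<forall>x y. E x y \<longrightarrow> E y x) \<and> (\<forall>x. \<not> E x x)"

definition simple_cycle :: "'a set \<Rightarrow> ('a \<Rightarrow> 'a \<Rightarrow> bool) \<Rightarrow> 'a list \<Rightarrow> bool" where
  "simple_cycle V E C \<longleftrightarrow> length C > 2 \<and> distinct C \<and> set C \<subseteq> V
     \<and> (\<forall>i. Suc i < length C \<longrightarrow> E (C ! i) (C ! Suc i))
     \<and> E (last C) (hd C)"

definition degree :: "'a set \<Rightarrow> ('a \<Rightarrow> 'a \<Rightarrow> bool) \<Rightarrow> 'a \<Rightarrow> nat" where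
  "degree V E v = card {u \<in> V. E v u}"

definition max_degree_on_cycle :: "'a set \<Rightarrow> ('a \<Rightarrow> 'a \<Rightarrow> bool) \<Rightarrow> 'a list \<Rightarrow> nat" where
  "max_degree_on_cycle V E C = Max (degree V E ` set C)"

definition induced_complete :: "('a \<Rightarrow> 'a \<Rightarrow> bool) \<Rightarrow> 'a set \<Rightarrow> bool" where
  "induced_complete E U \<longleftrightarrow> (\<forall>x\<in>U. \<forall>y\<in>U. x \<noteq> y \<longrightarrow> E x y)"

text \<open>H[U] is isomorphic to a cycle graph of odd length: U can be cyclically
  ordered so that adjacency within U is exactly cyclic consecutiveness.\<close>
definition induced_odd_cycle :: "('a \<Rightarrow> 'a \<Rightarrow> bool) \<Rightarrow> 'a set \<Rightarrow> bool" where
  "induced_odd_cycle E U \<longleftrightarrow> (\<exists>vs. distinct vs \<and> set vs = U \<and> length vs \<ge> 3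
     \<and> odd (length vs)
     \<and> (\<forall>i<length vs. \<forall>j<length vs.
          E (vs ! i) (vs ! j) \<longleftrightarrow>
            (j = Suc i mod length vs \<or> i = Suc j mod length vs)))"

definition removable :: "'a set \<Rightarrow> ('a \<Rightarrow> 'a \<Rightarrow> bool) \<Rightarrow> 'a list \<Rightarrow> bool" where
  "removable V E C \<longleftrightarrow> simple_cycle V E C \<and>
     \<not> induced_complete E (set C) \<and> \<not> induced_odd_cycle E (set C)"

text \<open>Partial proper k-colouring: None plays the role of \<bottom>; colours are 1..k.\<close>
definition partial_proper_coloring ::
  "'a set \<Rightarrow> ('a \<Rightarrow> 'a \<Rightarrow> bool) \<Rightarrow> nat \<Rightarrow> ('a \<Rightarrow> nat option) \<Rightarrow> bool" where
  "partial_proper_coloring V E k \<phi> \<longleftrightarrow>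
     (\<forall>v\<in>V. \<forall>c. \<phi> v = Some c \<longrightarrow> c \<in> {1..k})
     \<and> (\<forall>u\<in>V. \<forall>v\<in>V. E u v \<and> \<phi> u \<noteq> None \<and> \<phi> v \<noteq> None \<longrightarrow> \<phi> u \<noteq> \<phi> v)"

end

theory Submission
  imports Defs
begin


definition Bc :: "('a \<Rightarrow> 'a \<Rightarrow> bool) \<Rightarrow> ('a \<Rightarrow> nat option) \<Rightarrow> 'a \<Rightarrow> nat set" where
  "Bc E \<psi> v = {c. \<exists>u. E v u \<and> \<psi> u = Some c}"

definition Nb :: "('a \<Rightarrow> 'a \<Rightarrow> bool) \<Rightarrow> 'a set \<Rightarrow> 'a \<Rightarrow> 'a set" where
  "Nb E S v = {u\<in>S. E v u}"

lemma Bc_fin: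
  assumes "graph V E" shows "finite (Bc E \<psi> v)"
proof -
  have "Bc E \<psi> v \<subseteq> (\<lambda>u. the (\<psi> u)) ` {u\<in>V. E v u}"
    using assms unfolding Bc_def graph_def by force
  moreover have "finite {u\<in>V. E v u}" using assms unfolding graph_def by auto
  ultimately show ?thesis using finite_surj by blast
qed

lemma Nb_fin:
  assumes "finite S" shows "finite (Nb E S v)"
  using assms unfolding Nb_def by auto

lemma Bc_sub:
  assumes "graph V E" "partial_proper_coloring V E \<Delta> \<psi>"
  shows "Bc E \<psi> v \<subseteq> {1..\<Delta>}"
  using assms unfolding Bc_def graph_def partial_proper_coloring_def by blast

lemma free_color:
  assumes "graph V E" "partial_proper_coloring V E \<Delta> \<psi>" "card (Bc E \<psi> v) < \<Delta>"
  shows "\<exists>c\<in>{1..\<Delta>}. c \<notin> Bc E \<psi> v"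
proof (rule ccontr)
  assume "\<not> ?thesis"
  then have "{1..\<Delta>} \<subseteq> Bc E \<psi> v" by auto
  then have "card {1..\<Delta>} \<le> card (Bc E \<psi> v)" using Bc_fin[OF assms(1)] card_mono by blast
  then show False using assms(3) by simp
qed

lemma ppc_upd:
  assumes "graph V E" "partial_proper_coloring V E \<Delta> \<psi>" "c \<in> {1..\<Delta>}" "c \<notin> Bc E \<psi> v"
  shows "partial_proper_coloring V E \<Delta> (\<psi>(v := Some c))"
proof -
  have g: "\<forall>x y. E x y \<longrightarrow> x \<in> V \<and> y \<in> V" "\<forall>x y. E x y \<longrightarrow> E y x" "\<forall>x. \<not> E x x"
    using assms(1) unfolding graph_def by auto
  have p: "\<forall>v\<in>V. \<forall>c. \<psi> v = Some c \<longrightarrow> c \<in> {1..\<Delta>}"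
     "\<forall>u\<in>V. \<forall>v\<in>V. E u v \<and> \<psi> u \<noteq> None \<and> \<psi> v \<noteq> None \<longrightarrow> \<psi> u \<noteq> \<psi> v"
    using assms(2) unfolding partial_proper_coloring_def by auto
  have nb: "\<And>u. E v u \<Longrightarrow> \<psi> u \<noteq> Some c" using assms(4) unfolding Bc_def by auto
  show ?thesis unfolding partial_proper_coloring_def
  proof (intro conjI ballI allI impI)
    fix x d assume "x \<in> V" "(\<psi>(v := Some c)) x = Some d"
    then show "d \<in> {1..\<Delta>}" using p(1) assms(3) by (cases "x = v") auto
  next
    fix x y assume xy: "x \<in> V" "y \<in> V" "E x y \<and> (\<psi>(v := Some c)) x \<noteq> None \<and> (\<psi>(v := Some c)) y \<noteq> None"
    show "(\<psi>(v := Some c)) x \<noteq> (\<psi>(v := Some c)) y"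
    proof (cases "x = v")
      case True
      then have "y \<noteq> v" using xy g(3) by auto
      then show ?thesis using True nb xy by auto
    next
      case False
      show ?thesis
      proof (cases "y = v")
        case True
        then show ?thesis using False nb xy g(2) by fastforce
      next
        case False2: False
        then show ?thesis using False p(2) xy by auto
      qed
    qed
  qed
qed

lemma Bc_upd1: "Bc E (\<psi>(w := Some c)) v \<subseteq> insert c (Bc E \<psi> v)"
  unfolding Bc_def by auto

lemma Bc_upd2: "\<not> E v w \<Longrightarrow> Bc E (\<psi>(w := Some c)) v = Bc E \<psi> v"
  unfolding Bc_def by auto

lemma n_upd:
  assumes "graph V E" "finite S" "w \<in> S"
  shows "card (Bc E (\<psi>(w := Some c)) v) + card (Nb E (S - {w}) v)
           + (if E v w \<and> c \<in> Bc E \<psi> v then 1 else 0)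
         \<le> card (Bc E \<psi> v) + card (Nb E S v)"
proof (cases "E v w")
  case True
  have f: "finite (Bc E \<psi> v)" using Bc_fin[OF assms(1)] .
  have "Nb E (S - {w}) v = Nb E S v - {w}" unfolding Nb_def by auto
  moreover have "w \<in> Nb E S v" using True assms unfolding Nb_def by auto
  ultimately have n: "card (Nb E (S - {w}) v) + 1 = card (Nb E S v)"
  proof -
    have "card (Nb E S v) > 0" using \<open>w \<in> Nb E S v\<close> Nb_fin[OF assms(2)] card_gt_0_iff by blast
    then show ?thesis using \<open>Nb E (S - {w}) v = Nb E S v - {w}\<close> \<open>w \<in> Nb E S v\<close> card_Diff_singleton by simp
  qed
  show ?thesis
  proof (cases "c \<in> Bc E \<psi> v")
    case True
    then have "insert c (Bc E \<psi> v) = Bc E \<psi> v" by auto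
    then have "card (Bc E (\<psi>(w := Some c)) v) \<le> card (Bc E \<psi> v)"
      using Bc_upd1[of E \<psi> w c v] f by (metis card_mono)
    then show ?thesis using n by auto
  next
    case False
    have "card (Bc E (\<psi>(w := Some c)) v) \<le> card (insert c (Bc E \<psi> v))"
      using Bc_upd1[of E \<psi> w c v] f by (meson card_mono finite_insert)
    also have "\<dots> = card (Bc E \<psi> v) + 1" using False f by simp
    finally show ?thesis using n False by auto
  qed
next
  case False
  then have "Nb E (S - {w}) v = Nb E S v" unfolding Nb_def by auto
  then show ?thesis using Bc_upd2[of E v w \<psi> c, OF False] False by simp
qed

definition gcond :: "'a set \<Rightarrow> ('a \<Rightarrow> 'a \<Rightarrow> bool) \<Rightarrow> nat \<Rightarrow> ('a \<Rightarrow> nat option) \<Rightarrow> 'a set \<Rightarrow> ('a \<Rightarrow> nat) \<Rightarrow> bool" where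
  "gcond V E \<Delta> \<psi> S f \<longleftrightarrow> (\<forall>v\<in>S. card (Bc E \<psi> v) + card (Nb E S v) \<le> \<Delta>
      \<and> (card (Bc E \<psi> v) + card (Nb E S v) < \<Delta> \<or> (\<exists>u\<in>S. E v u \<and> f v < f u)))"

lemma greedy:
  assumes "graph V E" "S \<subseteq> V" "partial_proper_coloring V E \<Delta> \<psi>" "\<forall>v\<in>S. \<psi> v = None"
    "gcond V E \<Delta> \<psi> S f"
  shows "\<exists>\<psi>'. partial_proper_coloring V E \<Delta> \<psi>' \<and> (\<forall>v\<in>S. \<psi>' v \<noteq> None) \<and> (\<forall>v. v \<notin> S \<longrightarrow> \<psi>' v = \<psi> v)"
  using assms(2-)
proof (induction "card S" arbitrary: S \<psi> rule: less_induct)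
  case less
  show ?case
  proof (cases "S = {}")
    case True
    then show ?thesis using less by auto
  next
    case False
    have fS: "finite S" using less(2) assms(1) unfolding graph_def by (meson finite_subset)
    have "Min (f ` S) \<in> f ` S" using False fS by simp
    then obtain w where w1: "w \<in> S" "f w = Min (f ` S)" by auto
    have w: "w \<in> S" "\<forall>v\<in>S. f w \<le> f v" using w1 fS by auto
    have gw: "card (Bc E \<psi> w) + card (Nb E S w) \<le> \<Delta> \<and> (card (Bc E \<psi> w) + card (Nb E S w) < \<Delta> \<or> (\<exists>u\<in>S. E w u \<and> f w < f u))"
      using less(5) w(1) unfolding gcond_def by blast
    have "card (Bc E \<psi> w) < \<Delta>"
    proof (cases "card (Bc E \<psi> w) + card (Nb E S w) < \<Delta>")
      case True then show ?thesis by simp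
    next
      case False
      then obtain u where "u \<in> S" "E w u" using gw by blast
      then have "u \<in> Nb E S w" unfolding Nb_def by auto
      then have "card (Nb E S w) > 0" using Nb_fin[OF fS] by (metis card_gt_0_iff empty_iff)
      then show ?thesis using gw by simp
    qed
    then obtain c where c: "c \<in> {1..\<Delta>}" "c \<notin> Bc E \<psi> w" using free_color[OF assms(1) less(3)] by blast
    define \<psi>1 where "\<psi>1 = \<psi>(w := Some c)"
    have p1: "partial_proper_coloring V E \<Delta> \<psi>1" unfolding \<psi>1_def using ppc_upd[OF assms(1) less(3) c] .
    have card_lt: "card (S - {w}) < card S" using w(1) fS by (meson card_Diff1_less)
    have g1: "gcond V E \<Delta> \<psi>1 (S - {w}) f"
      unfolding gcond_def
    proof
      fix v assume v: "v \<in> S - {w}"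
      have le: "card (Bc E \<psi>1 v) + card (Nb E (S - {w}) v) \<le> card (Bc E \<psi> v) + card (Nb E S v)"
        using n_upd[OF assms(1) fS w(1), of \<psi> c v] unfolding \<psi>1_def by linarith
      have gv: "card (Bc E \<psi> v) + card (Nb E S v) \<le> \<Delta> \<and> (card (Bc E \<psi> v) + card (Nb E S v) < \<Delta> \<or> (\<exists>u\<in>S. E v u \<and> f v < f u))"
        using less(5) v unfolding gcond_def by blast
      have "(\<exists>u\<in>S. E v u \<and> f v < f u) \<Longrightarrow> (\<exists>u\<in>S - {w}. E v u \<and> f v < f u)"
      proof -
        assume "\<exists>u\<in>S. E v u \<and> f v < f u"
        then obtain u where u: "u \<in> S" "E v u" "f v < f u" by blast
        have "f w \<le> f v" using w(2) v by auto
        then have "u \<noteq> w" using u by auto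
        then show ?thesis using u by blast
      qed
      then show "card (Bc E \<psi>1 v) + card (Nb E (S - {w}) v) \<le> \<Delta> \<and>
          (card (Bc E \<psi>1 v) + card (Nb E (S - {w}) v) < \<Delta> \<or> (\<exists>u\<in>S - {w}. E v u \<and> f v < f u))"
        using le gv by linarith
    qed
    obtain \<psi>' where \<psi>': "partial_proper_coloring V E \<Delta> \<psi>'" "\<forall>v\<in>S - {w}. \<psi>' v \<noteq> None"
        "\<forall>v. v \<notin> S - {w} \<longrightarrow> \<psi>' v = \<psi>1 v"
      using less(1)[OF card_lt, of \<psi>1] less(2,4) p1 g1 unfolding \<psi>1_def by auto
    have "\<forall>v\<in>S. \<psi>' v \<noteq> None"
    proof
      fix v assume "v \<in> S"
      then show "\<psi>' v \<noteq> None" using \<psi>'(2,3) unfolding \<psi>1_def by (cases "v = w") auto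
    qed
    moreover have "\<forall>v. v \<notin> S \<longrightarrow> \<psi>' v = \<psi> v" using \<psi>'(3) w(1) unfolding \<psi>1_def by auto
    ultimately show ?thesis using \<psi>'(1) by blast
  qed
qed




definition idx :: "'a list \<Rightarrow> 'a \<Rightarrow> nat" where "idx D v = (LEAST t. D ! t = v)"

lemma idx_nth: assumes "distinct D" "t < length D" shows "idx D (D ! t) = t"
  unfolding idx_def
proof (rule Least_equality)
  fix y assume "D ! y = D ! t"
  then show "t \<le> y" by (cases "y < length D") (use assms nth_eq_iff_index_eq in auto)
qed simp

definition cyc :: "('a \<Rightarrow> 'a \<Rightarrow> bool) \<Rightarrow> 'a set \<Rightarrow> 'a list \<Rightarrow> bool" where
  "cyc E U D \<longleftrightarrow> distinct D \<and> set D = U \<and> 3 \<le> length D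
     \<and> (\<forall>i<length D. E (D ! i) (D ! (Suc i mod length D)))"

lemma rot_nth: "i < length D \<Longrightarrow> rotate s D ! i = D ! ((s + i) mod length D)"
  by (simp add: nth_rotate)

lemma cyc_rot: assumes "cyc E U D" shows "cyc E U (rotate s D)"
proof -
  let ?k = "length D"
  have k: "?k \<ge> 3" using assms unfolding cyc_def by auto
  have "\<forall>i<?k. E (rotate s D ! i) (rotate s D ! (Suc i mod ?k))"
  proof (intro allI impI)
    fix i assume i: "i < ?k"
    have "(s + i) mod ?k < ?k" by (rule mod_less_divisor) (use k in linarith)
    then have e: "E (D ! ((s + i) mod ?k)) (D ! (Suc ((s + i) mod ?k) mod ?k))"
      using assms unfolding cyc_def by blast
    have "(s + Suc i mod ?k) mod ?k = Suc ((s + i) mod ?k) mod ?k"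
      by (simp add: mod_add_right_eq mod_Suc_eq)
    moreover have "Suc i mod ?k < ?k" by (rule mod_less_divisor) (use k in linarith)
    ultimately show "E (rotate s D ! i) (rotate s D ! (Suc i mod ?k))"
      using e i rot_nth[of i D s] rot_nth[of "Suc i mod ?k" D s] by simp
  qed
  then show ?thesis using assms unfolding cyc_def by simp
qed


locale setting =
  fixes V :: "'a set" and E :: "'a \<Rightarrow> 'a \<Rightarrow> bool" and \<Delta> :: nat and \<phi> :: "'a \<Rightarrow> nat option" and U :: "'a set"
  assumes G: "graph V E" and UV: "U \<subseteq> V" and P: "partial_proper_coloring V E \<Delta> \<phi>"
    and NU: "\<forall>v\<in>U. \<phi> v = None" and DG: "\<forall>v\<in>U. degree V E v \<le> \<Delta>"
begin

abbreviation "goal \<equiv> (\<exists>\<phi>'. partial_proper_coloring V E \<Delta> \<phi>' \<and> (\<forall>u\<in>U. \<phi>' u \<noteq> None) \<and> (\<forall>u\<in>V - U. \<phi>' u = \<phi> u))"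

lemma finV: "finite V" using G unfolding graph_def by auto
lemma finU: "finite U" using finV UV finite_subset by blast
lemma Esym: "E x y \<Longrightarrow> E y x" using G unfolding graph_def by auto
lemma Eirr: "\<not> E x x" using G unfolding graph_def by auto

lemma n_le: assumes "v \<in> U" shows "card (Bc E \<phi> v) + card (Nb E U v) \<le> \<Delta>"
proof -
  have "Bc E \<phi> v \<subseteq> (\<lambda>u. the (\<phi> u)) ` {u\<in>V - U. E v u}"
  proof
    fix c assume "c \<in> Bc E \<phi> v"
    then obtain u where u: "E v u" "\<phi> u = Some c" unfolding Bc_def by auto
    then have "u \<in> V" "u \<notin> U" using G NU unfolding graph_def by auto
    then show "c \<in> (\<lambda>u. the (\<phi> u)) ` {u\<in>V - U. E v u}" using u by force
  qed
  moreover have "finite {u\<in>V - U. E v u}" using finV by auto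
  ultimately have "card (Bc E \<phi> v) \<le> card ((\<lambda>u. the (\<phi> u)) ` {u\<in>V - U. E v u})"
    by (intro card_mono) auto
  also have "\<dots> \<le> card {u\<in>V - U. E v u}" by (rule card_image_le) (use finV in auto)
  finally have b1: "card (Bc E \<phi> v) \<le> card {u\<in>V - U. E v u}" .
  have "{u\<in>V. E v u} = {u\<in>V - U. E v u} \<union> Nb E U v" using UV unfolding Nb_def by auto
  moreover have "card ({u\<in>V - U. E v u} \<union> Nb E U v) = card {u\<in>V - U. E v u} + card (Nb E U v)"
    by (rule card_Un_disjoint) (use finV finU in \<open>auto simp: Nb_def\<close>)
  ultimately have "card {u\<in>V. E v u} = card {u\<in>V - U. E v u} + card (Nb E U v)" by simp
  moreover have "degree V E v \<le> \<Delta>" using DG assms by auto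
  ultimately show ?thesis using b1 unfolding degree_def by linarith
qed

lemma finish:
  assumes "partial_proper_coloring V E \<Delta> \<psi>" "\<forall>v. v \<notin> U \<longrightarrow> \<psi> v = \<phi> v" "S \<subseteq> U"
    "\<forall>v\<in>U - S. \<psi> v \<noteq> None" "\<forall>v\<in>S. \<psi> v = None" "gcond V E \<Delta> \<psi> S f"
  shows goal
proof -
  obtain \<psi>' where p: "partial_proper_coloring V E \<Delta> \<psi>'" "\<forall>v\<in>S. \<psi>' v \<noteq> None" "\<forall>v. v \<notin> S \<longrightarrow> \<psi>' v = \<psi> v"
    using greedy[OF G _ assms(1) assms(5,6)] assms(3) UV by blast
  have "\<forall>u\<in>U. \<psi>' u \<noteq> None"
  proof
    fix u assume "u \<in> U" then show "\<psi>' u \<noteq> None" using p(2,3) assms(4) by (cases "u \<in> S") auto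
  qed
  moreover have "\<forall>u\<in>V - U. \<psi>' u = \<phi> u" using p(3) assms(2,3) by auto
  ultimately show ?thesis using p(1) by blast
qed

lemma case1:
  assumes "cyc E U D" "card (Bc E \<phi> (D ! (length D - 1))) + card (Nb E U (D ! (length D - 1))) < \<Delta>"
  shows goal
proof -
  let ?k = "length D"
  have c: "distinct D" "set D = U" "3 \<le> ?k" "\<forall>i<?k. E (D ! i) (D ! (Suc i mod ?k))"
    using assms(1) unfolding cyc_def by auto
  have "gcond V E \<Delta> \<phi> U (idx D)"
    unfolding gcond_def
  proof
    fix v assume v: "v \<in> U"
    then obtain t where t: "t < ?k" "v = D ! t" using c(2) by (metis in_set_conv_nth)
    have "card (Bc E \<phi> v) + card (Nb E U v) < \<Delta> \<or> (\<exists>u\<in>U. E v u \<and> idx D v < idx D u)"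
    proof (cases "t = ?k - 1")
      case True then show ?thesis using assms(2) t by simp
    next
      case False
      then have t1: "Suc t < ?k" using t by auto
      then have "E v (D ! Suc t)" using c(4) t by (metis mod_less)
      moreover have "D ! Suc t \<in> U" using c(2) t1 by auto
      moreover have "idx D v < idx D (D ! Suc t)" using idx_nth[OF c(1)] t t1 by simp
      ultimately show ?thesis by blast
    qed
    then show "card (Bc E \<phi> v) + card (Nb E U v) \<le> \<Delta> \<and>
         (card (Bc E \<phi> v) + card (Nb E U v) < \<Delta> \<or> (\<exists>u\<in>U. E v u \<and> idx D v < idx D u))"
      using n_le[OF v] by blast
  qed
  then show ?thesis using finish[OF P, of U "idx D"] NU by auto
qed

lemma casea:
  assumes "cyc E U D" "c \<in> Bc E \<phi> (D ! (length D - 1))" "c \<notin> Bc E \<phi> (D ! 0)"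
  shows goal
proof -
  let ?k = "length D"
  have cy: "distinct D" "set D = U" "3 \<le> ?k" "\<forall>i<?k. E (D ! i) (D ! (Suc i mod ?k))"
    using assms(1) unfolding cyc_def by auto
  have cr: "c \<in> {1..\<Delta>}" using Bc_sub[OF G P, of "D ! (length D - 1)"] assms(2) by blast
  define \<psi> where "\<psi> = \<phi>(D ! 0 := Some c)"
  have p: "partial_proper_coloring V E \<Delta> \<psi>" unfolding \<psi>_def by (rule ppc_upd[OF G P cr assms(3)])
  have "0 < length D" using cy(3) by linarith
  then have d0: "D ! 0 \<in> U" using cy(2) nth_mem by blast
  let ?S = "U - {D ! 0}"
  have "gcond V E \<Delta> \<psi> ?S (idx D)"
    unfolding gcond_def
  proof
    fix v assume v: "v \<in> ?S"
    then obtain t where t: "t < ?k" "v = D ! t" using cy(2) by (metis in_set_conv_nth DiffD1)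
    have t0: "t \<noteq> 0" using v t by (metis DiffE singletonI)
    have nu: "card (Bc E \<psi> v) + card (Nb E ?S v) + (if E v (D ! 0) \<and> c \<in> Bc E \<phi> v then 1 else 0) \<le> \<Delta>"
      using n_upd[OF G finU d0, of \<phi> c v] n_le[of v] v unfolding \<psi>_def by auto
    have "card (Bc E \<psi> v) + card (Nb E ?S v) < \<Delta> \<or> (\<exists>u\<in>?S. E v u \<and> idx D v < idx D u)"
    proof (cases "t = ?k - 1")
      case True
      have "Suc t = ?k" using True cy(3) by linarith
      then have "Suc t mod ?k = 0" by simp
      then have "E v (D ! 0)" using cy(4) t by metis
      then show ?thesis using nu True t assms(2) by auto
    next
      case False
      then have t1: "Suc t < ?k" using t by auto
      then have "E v (D ! Suc t)" using cy(4) t by (metis mod_less)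
      moreover have "D ! Suc t \<in> ?S"
      proof -
        have "D ! Suc t \<in> U" using cy(2) t1 nth_mem by blast
        moreover have "D ! Suc t \<noteq> D ! 0" using t1 nth_eq_iff_index_eq[OF cy(1), of "Suc t" 0] \<open>0 < length D\<close> by simp
        ultimately show ?thesis by blast
      qed
      moreover have "idx D v < idx D (D ! Suc t)" using idx_nth[OF cy(1)] t t1 by simp
      ultimately show ?thesis by blast
    qed
    then show "card (Bc E \<psi> v) + card (Nb E ?S v) \<le> \<Delta> \<and>
         (card (Bc E \<psi> v) + card (Nb E ?S v) < \<Delta> \<or> (\<exists>u\<in>?S. E v u \<and> idx D v < idx D u))"
      using nu by auto
  qed
  moreover have "\<forall>v. v \<notin> U \<longrightarrow> \<psi> v = \<phi> v" using d0 unfolding \<psi>_def by auto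
  moreover have "\<forall>v\<in>U - ?S. \<psi> v \<noteq> None" unfolding \<psi>_def by auto
  moreover have "\<forall>v\<in>?S. \<psi> v = None" using NU unfolding \<psi>_def by auto
  ultimately show ?thesis using finish[OF p] by blast
qed

end



context setting
begin

lemma caseb:
  fixes f :: "'a \<Rightarrow> nat"
  assumes "x \<in> U" "y \<in> U" "z \<in> U" "x \<noteq> y" "\<not> E x y" "E z x" "E z y" "c \<in> {1..\<Delta>}"
    "c \<notin> Bc E \<phi> x" "c \<notin> Bc E \<phi> y"
    "\<forall>v\<in>U - {x,y} - {z}. \<exists>u\<in>U - {x,y}. E v u \<and> f v < f u"
  shows goal
proof -
  define \<psi>0 where "\<psi>0 = \<phi>(x := Some c)"
  have p0: "partial_proper_coloring V E \<Delta> \<psi>0" unfolding \<psi>0_def by (rule ppc_upd[OF G P assms(8,9)])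
  have "\<not> E y x" using assms(5) Esym by blast
  then have "Bc E \<psi>0 y = Bc E \<phi> y" unfolding \<psi>0_def by (rule Bc_upd2)
  then have cy: "c \<notin> Bc E \<psi>0 y" using assms(10) by simp
  define \<psi> where "\<psi> = \<psi>0(y := Some c)"
  have p: "partial_proper_coloring V E \<Delta> \<psi>" unfolding \<psi>_def by (rule ppc_upd[OF G p0 assms(8) cy])
  let ?S = "U - {x,y}"
  have eqS: "U - {x} - {y} = ?S" by auto
  have yx: "y \<in> U - {x}" using assms by auto
  have fx: "finite (U - {x})" using finU by auto
  have "gcond V E \<Delta> \<psi> ?S f"
    unfolding gcond_def
  proof
    fix v assume v: "v \<in> ?S"
    have h1: "card (Bc E \<psi>0 v) + card (Nb E (U - {x}) v) \<le> card (Bc E \<phi> v) + card (Nb E U v)"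
      using n_upd[OF G finU assms(1), of \<phi> c v] unfolding \<psi>0_def by linarith
    have h2: "card (Bc E \<psi> v) + card (Nb E ?S v) + (if E v y \<and> c \<in> Bc E \<psi>0 v then 1 else 0)
        \<le> card (Bc E \<psi>0 v) + card (Nb E (U - {x}) v)"
      using n_upd[OF G fx yx, of \<psi>0 c v] unfolding \<psi>_def eqS .
    have h3: "card (Bc E \<phi> v) + card (Nb E U v) \<le> \<Delta>" using n_le v by auto
    have "card (Bc E \<psi> v) + card (Nb E ?S v) < \<Delta> \<or> (\<exists>u\<in>?S. E v u \<and> f v < f u)"
    proof (cases "v = z")
      case True
      have "c \<in> Bc E \<psi>0 v" using True assms(6) unfolding \<psi>0_def Bc_def by auto
      then show ?thesis using h1 h2 h3 True assms(7) by auto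
    next
      case False
      then show ?thesis using assms(11) v by blast
    qed
    then show "card (Bc E \<psi> v) + card (Nb E ?S v) \<le> \<Delta> \<and>
         (card (Bc E \<psi> v) + card (Nb E ?S v) < \<Delta> \<or> (\<exists>u\<in>?S. E v u \<and> f v < f u))"
      using h1 h2 h3 by linarith
  qed
  moreover have "\<forall>v. v \<notin> U \<longrightarrow> \<psi> v = \<phi> v" using assms(1,2) unfolding \<psi>_def \<psi>0_def by auto
  moreover have "\<forall>v\<in>U - ?S. \<psi> v \<noteq> None" unfolding \<psi>_def \<psi>0_def by auto
  moreover have "\<forall>v\<in>?S. \<psi> v = None" using NU unfolding \<psi>_def \<psi>0_def by auto
  ultimately show ?thesis using finish[OF p] by blast
qed

end



context setting
begin

lemma cyc_facts:
  assumes "cyc E U D"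
  shows "distinct D" "set D = U" "3 \<le> length D"
    "\<And>a b. a < length D \<Longrightarrow> b < length D \<Longrightarrow> (D ! a = D ! b) = (a = b)"
    "\<And>a. a < length D \<Longrightarrow> D ! a \<in> U"
    "\<And>i. Suc i < length D \<Longrightarrow> E (D ! i) (D ! Suc i)"
    "\<And>i. i < length D \<Longrightarrow> E (D ! i) (D ! (Suc i mod length D))"
    "0 < length D" "1 < length D" "2 < length D"
proof -
  have cy: "distinct D" "set D = U" "3 \<le> length D" "\<forall>i<length D. E (D ! i) (D ! (Suc i mod length D))"
    using assms unfolding cyc_def by auto
  show "distinct D" "set D = U" "3 \<le> length D" using cy by auto
  show "\<And>a b. a < length D \<Longrightarrow> b < length D \<Longrightarrow> (D ! a = D ! b) = (a = b)"
    using nth_eq_iff_index_eq[OF cy(1)] by blast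
  show "\<And>a. a < length D \<Longrightarrow> D ! a \<in> U" using cy(2) nth_mem by blast
  show "\<And>i. Suc i < length D \<Longrightarrow> E (D ! i) (D ! Suc i)"
    using cy(4) by (metis Suc_lessD mod_less)
  show "\<And>i. i < length D \<Longrightarrow> E (D ! i) (D ! (Suc i mod length D))" using cy(4) by blast
  show "0 < length D" "1 < length D" "2 < length D" using cy(3) by linarith+
qed

lemma caseb1:
  assumes "cyc E U D" "3 \<le> j" "j < length D" "\<not> E (D ! 0) (D ! 2)" "E (D ! 1) (D ! j)"
    "c \<in> {1..\<Delta>}" "c \<notin> Bc E \<phi> (D ! 0)" "c \<notin> Bc E \<phi> (D ! 2)"
  shows goal
proof -
  let ?k = "length D"
  note cf = cyc_facts[OF assms(1)]
  have e01: "E (D ! 1) (D ! 0)" using cf(6)[of 0] cf(3) Esym by auto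
  have e12: "E (D ! 1) (D ! 2)" using cf(6)[of 1] cf(3) by (simp add: numeral_2_eq_2)
  define r where "r t = (if t = 1 then ?k + 1 else if t < j then t else ?k + j - t)" for t
  show ?thesis
  proof (rule caseb[of "D ! 0" "D ! 2" "D ! 1" c "\<lambda>v. r (idx D v)"])
    show "D ! 0 \<in> U" "D ! 2 \<in> U" "D ! 1 \<in> U" using cf(5,8,9,10) by auto
    show "D ! 0 \<noteq> D ! 2" using cf(4)[of 0 2] cf(8,10) by auto
  next
    show "\<forall>v\<in>U - {D ! 0, D ! 2} - {D ! 1}. \<exists>u\<in>U - {D ! 0, D ! 2}. E v u \<and> r (idx D v) < r (idx D u)"
    proof
      fix v assume v: "v \<in> U - {D ! 0, D ! 2} - {D ! 1}"
      then obtain t where t: "t < ?k" "v = D ! t" using cf(2) by (metis DiffD1 in_set_conv_nth)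
      have t3: "t \<ge> 3" using v t cf(3,4)
        by (metis DiffE insertCI less_2_cases_iff nat_less_le numeral_3_eq_3 less_Suc_eq not_le Suc_1 One_nat_def)
      show "\<exists>u\<in>U - {D ! 0, D ! 2}. E v u \<and> r (idx D v) < r (idx D u)"
      proof (cases "t < j")
        case True
        have s: "Suc t < ?k" using True assms(3) by simp
        have "D ! Suc t \<in> U - {D ! 0, D ! 2}" using cf(3,4,5,8,9,10) s t3 by auto
        moreover have "E v (D ! Suc t)" using cf(6) s t by auto
        moreover have "r (idx D v) < r (idx D (D ! Suc t))"
          using idx_nth[OF cf(1)] s t t3 True unfolding r_def by auto
        ultimately show ?thesis by blast
      next
        case False
        show ?thesis
        proof (cases "t = j")
          case True
          have "D ! 1 \<in> U - {D ! 0, D ! 2}" using cf(3,4,5,8,9,10) by auto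
          moreover have "E v (D ! 1)" using assms(5) True t Esym by auto
          moreover have "r (idx D v) < r (idx D (D ! 1))"
            using idx_nth[OF cf(1)] t t3 True cf(3) unfolding r_def by auto
          ultimately show ?thesis by blast
        next
          case False2: False
          then have tj: "t > j" using False by auto
          have s: "t - 1 < ?k" "Suc (t - 1) = t" using t tj by auto
          have "D ! (t - 1) \<in> U - {D ! 0, D ! 2}" using cf(3,4,5,8,9,10) s tj assms(2) by auto
          moreover have "E v (D ! (t - 1))" using cf(6)[of "t - 1"] s t Esym by auto
          moreover have "r (idx D v) < r (idx D (D ! (t - 1)))"
            using idx_nth[OF cf(1)] s t tj assms(2) unfolding r_def by auto
          ultimately show ?thesis by blast
        qed
      qed
    qed
  qed (use assms e01 e12 in auto)
qed

lemma caseb2: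
  assumes "cyc E U D" "2 \<le> m" "m < length D" "\<not> E (D ! 0) (D ! m)" "E (D ! 0) (D ! (m - 1))"
    "E (D ! (length D - 1)) (D ! 1)"
    "c \<in> {1..\<Delta>}" "c \<notin> Bc E \<phi> (D ! 0)" "c \<notin> Bc E \<phi> (D ! m)"
  shows goal
proof -
  let ?k = "length D"
  note cf = cyc_facts[OF assms(1)]
  have ezx: "E (D ! (m - 1)) (D ! 0)" using assms(5) Esym by auto
  have ezy: "E (D ! (m - 1)) (D ! m)" using cf(6)[of "m - 1"] assms(2,3) by auto
  define r where "r t = (if m < t then t - m else ?k + t)" for t
  show ?thesis
  proof (rule caseb[of "D ! 0" "D ! m" "D ! (m - 1)" c "\<lambda>v. r (idx D v)"])
    have k0: "0 < length D" using cf(3) by linarith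
    show "D ! 0 \<in> U" "D ! m \<in> U" "D ! (m - 1) \<in> U" using cf(5) k0 assms(3) by auto
    show "D ! 0 \<noteq> D ! m" using cf(4)[of 0 m] k0 assms(2,3) by auto
  next
    show "\<forall>v\<in>U - {D ! 0, D ! m} - {D ! (m - 1)}. \<exists>u\<in>U - {D ! 0, D ! m}. E v u \<and> r (idx D v) < r (idx D u)"
    proof
      fix v assume v: "v \<in> U - {D ! 0, D ! m} - {D ! (m - 1)}"
      then obtain t where t: "t < ?k" "v = D ! t" using cf(2) by (metis DiffD1 in_set_conv_nth)
      have tn: "t \<noteq> 0" "t \<noteq> m" "t \<noteq> m - 1" by (rule notI, use v t in auto)+
      show "\<exists>u\<in>U - {D ! 0, D ! m}. E v u \<and> r (idx D v) < r (idx D u)"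
      proof (cases "m < t")
        case True
        show ?thesis
        proof (cases "Suc t < ?k")
          case True2: True
          have "D ! Suc t \<in> U - {D ! 0, D ! m}" using cf(3,4,5,8,9,10) True2 True assms(3) by auto
          moreover have "E v (D ! Suc t)" using cf(6) True2 t by auto
          moreover have "r (idx D v) < r (idx D (D ! Suc t))"
            using idx_nth[OF cf(1)] True2 t True unfolding r_def by auto
          ultimately show ?thesis by blast
        next
          case False
          then have tk: "t = ?k - 1" using t by auto
          have "D ! 1 \<in> U - {D ! 0, D ! m}" using cf(3,4,5,8,9,10) assms(2,3) by auto
          moreover have "E v (D ! 1)" using assms(6) tk t by auto
          moreover have "r (idx D v) < r (idx D (D ! 1))"
            using idx_nth[OF cf(1)] t True cf(3) assms(2) unfolding r_def by auto
          ultimately show ?thesis by blast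
        qed
      next
        case False
        then have s: "Suc t < m" using tn by auto
        have "D ! Suc t \<in> U - {D ! 0, D ! m}" using cf(3,4,5,8,9,10) s assms(3) by auto
        moreover have "E v (D ! Suc t)" using cf(6)[of t] s t assms(3) by auto
        moreover have "r (idx D v) < r (idx D (D ! Suc t))"
          using idx_nth[OF cf(1)] s t assms(3) unfolding r_def by auto
        ultimately show ?thesis by blast
      qed
    qed
  qed (use assms ezx ezy in auto)
qed

end



lemma pred_mod: assumes "t < k" shows "Suc ((t + k - 1) mod k) mod k = t" "(t + k - 1) mod k < k"
proof -
  show "(t + k - 1) mod k < k" using assms by simp
  show "Suc ((t + k - 1) mod k) mod k = t"
  proof (cases t)
    case 0
    then show ?thesis using assms by simp
  next
    case (Suc t')
    then have "t + k - 1 = t' + k" by simp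
    then have "(t + k - 1) mod k = t'" using assms Suc by simp
    then show ?thesis using assms Suc by simp
  qed
qed

lemma pred_ne_suc: assumes "t < k" "3 \<le> k" shows "(t + k - 1) mod k \<noteq> Suc t mod k"
proof (cases t)
  case 0
  then show ?thesis using assms by simp
next
  case (Suc t')
  then have a: "(t + k - 1) mod k = t'" using assms by simp
  show ?thesis
  proof (cases "Suc t < k")
    case True then show ?thesis using a Suc by simp
  next
    case False
    then have "Suc t = k" using assms by simp
    then show ?thesis using a Suc assms by simp
  qed
qed

lemma parity_suc: assumes "t < k" "even k" shows "even (Suc t mod k) \<longleftrightarrow> odd t"
proof (cases "Suc t < k")
  case True then show ?thesis by simp
next
  case False
  then have "Suc t = k" using assms by simp
  then show ?thesis using assms by auto
qed

context setting
begin

lemma adj_iff: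
  assumes "cyc E U D"
    "\<forall>t<length D. Nb E U (D ! t) \<subseteq> {D ! ((t + length D - 1) mod length D), D ! (Suc t mod length D)}"
    "s < length D" "t < length D"
  shows "E (D ! t) (D ! s) \<longleftrightarrow> (s = Suc t mod length D \<or> t = Suc s mod length D)"
proof
  let ?k = "length D"
  note cf = cyc_facts[OF assms(1)]
  assume e: "E (D ! t) (D ! s)"
  then have "D ! s \<in> Nb E U (D ! t)" using cf(5) assms(3) unfolding Nb_def by auto
  then have "D ! s = D ! ((t + ?k - 1) mod ?k) \<or> D ! s = D ! (Suc t mod ?k)" using assms(2,4) by auto
  moreover have "(t + ?k - 1) mod ?k < ?k" "Suc t mod ?k < ?k" using cf(8) by simp_all
  ultimately have "s = (t + ?k - 1) mod ?k \<or> s = Suc t mod ?k" using cf(4) assms(3) by metis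
  then show "s = Suc t mod ?k \<or> t = Suc s mod ?k" using pred_mod[OF assms(4)] by auto
next
  note cf = cyc_facts[OF assms(1)]
  assume "s = Suc t mod length D \<or> t = Suc s mod length D"
  then show "E (D ! t) (D ! s)" using cf(7) assms(3,4) Esym by auto
qed

lemma oddcase:
  assumes "cyc E U D"
    "\<forall>t<length D. Nb E U (D ! t) \<subseteq> {D ! ((t + length D - 1) mod length D), D ! (Suc t mod length D)}"
    "odd (length D)"
  shows "induced_odd_cycle E U"
  unfolding induced_odd_cycle_def
  apply (rule exI[of _ D])
  using cyc_facts[OF assms(1)] assms(3) adj_iff[OF assms(1,2)] by auto

lemma evencase:
  assumes "cyc E U D"
    "\<forall>t<length D. Nb E U (D ! t) \<subseteq> {D ! ((t + length D - 1) mod length D), D ! (Suc t mod length D)}"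
    "even (length D)" "c1 \<noteq> c2" "c1 \<in> {1..\<Delta>}" "c2 \<in> {1..\<Delta>}"
    "\<forall>v\<in>U. c1 \<notin> Bc E \<phi> v \<and> c2 \<notin> Bc E \<phi> v"
  shows goal
proof -
  let ?k = "length D"
  note cf = cyc_facts[OF assms(1)]
  define col where "col v = (if even (idx D v) then c1 else c2)" for v
  define \<psi> where "\<psi> v = (if v \<in> U then Some (col v) else \<phi> v)" for v
  have Pp: "\<forall>v\<in>V. \<forall>c. \<phi> v = Some c \<longrightarrow> c \<in> {1..\<Delta>}"
     "\<forall>u\<in>V. \<forall>v\<in>V. E u v \<and> \<phi> u \<noteq> None \<and> \<phi> v \<noteq> None \<longrightarrow> \<phi> u \<noteq> \<phi> v"
    using P unfolding partial_proper_coloring_def by auto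
  have inU: "\<And>u v. u \<in> U \<Longrightarrow> v \<in> U \<Longrightarrow> E u v \<Longrightarrow> col u \<noteq> col v"
  proof -
    fix u v assume uv: "u \<in> U" "v \<in> U" "E u v"
    obtain t where t: "t < ?k" "u = D ! t" using uv(1) cf(2) by (metis in_set_conv_nth)
    obtain s where s: "s < ?k" "v = D ! s" using uv(2) cf(2) by (metis in_set_conv_nth)
    have "s = Suc t mod ?k \<or> t = Suc s mod ?k" using adj_iff[OF assms(1,2) s(1) t(1)] uv(3) t s by simp
    then have "even s \<longleftrightarrow> odd t" using parity_suc[OF t(1) assms(3)] parity_suc[OF s(1) assms(3)] by auto
    then show "col u \<noteq> col v" unfolding col_def using idx_nth[OF cf(1)] s t assms(4) by auto
  qed
  have mixed: "\<And>u v. u \<in> U \<Longrightarrow> v \<notin> U \<Longrightarrow> E u v \<Longrightarrow> \<phi> v \<noteq> Some (col u)"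
  proof -
    fix u v assume uv: "u \<in> U" "v \<notin> U" "E u v"
    have "\<phi> v = Some (col u) \<Longrightarrow> col u \<in> Bc E \<phi> u" using uv unfolding Bc_def by auto
    then show "\<phi> v \<noteq> Some (col u)" using assms(7) uv(1) unfolding col_def by (cases "even (idx D u)") auto
  qed
  have "partial_proper_coloring V E \<Delta> \<psi>"
    unfolding partial_proper_coloring_def
  proof (intro conjI ballI allI impI)
    fix v c assume "v \<in> V" "\<psi> v = Some c"
    then show "c \<in> {1..\<Delta>}" using Pp(1) assms(5,6) unfolding \<psi>_def col_def by (auto split: if_splits)
  next
    fix u v assume uv: "u \<in> V" "v \<in> V" "E u v \<and> \<psi> u \<noteq> None \<and> \<psi> v \<noteq> None"
    show "\<psi> u \<noteq> \<psi> v"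
    proof (cases "u \<in> U")
      case uU: True
      show ?thesis
      proof (cases "v \<in> U")
        case vU: True
        show ?thesis using inU[OF uU vU] uv uU vU unfolding \<psi>_def by auto
      next
        case vU: False
        show ?thesis using mixed[OF uU vU] uv uU vU unfolding \<psi>_def by auto
      qed
    next
      case uU: False
      show ?thesis
      proof (cases "v \<in> U")
        case vU: True
        have "E v u" using uv Esym by blast
        show ?thesis using mixed[OF vU uU \<open>E v u\<close>] uv uU vU unfolding \<psi>_def by auto
      next
        case vU: False
        show ?thesis using Pp(2) uv uU vU unfolding \<psi>_def by auto
      qed
    qed
  qed
  moreover have "\<forall>u\<in>U. \<psi> u \<noteq> None" unfolding \<psi>_def by auto
  moreover have "\<forall>u\<in>V - U. \<psi> u = \<phi> u" unfolding \<psi>_def by auto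
  ultimately show ?thesis by blast
qed

end



context setting
begin

lemma chain_sub:
  assumes "\<forall>i<k. A i \<subseteq> A (Suc i)"
  shows "s + n \<le> k \<Longrightarrow> A s \<subseteq> A (s + n)"
proof (induction n)
  case 0 then show ?case by simp
next
  case (Suc n)
  then have "A s \<subseteq> A (s + n)" by simp
  also have "\<dots> \<subseteq> A (Suc (s + n))" using assms Suc.prems by simp
  finally show ?case by simp
qed

lemma main:
  assumes cy: "cyc E U D" and nc: "\<not> induced_complete E U" and no: "\<not> induced_odd_cycle E U"
  shows goal
proof -
  let ?k = "length D"
  note cf = cyc_facts[OF cy]
  let ?p = "\<lambda>t. (t + ?k - 1) mod ?k"
  let ?s = "\<lambda>t. Suc t mod ?k"
  have rD: "\<And>s i. i < ?k \<Longrightarrow> rotate s D ! i = D ! ((s + i) mod ?k)" by (rule rot_nth)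
  have lr: "\<And>s. length (rotate s D) = ?k" by simp
  have cyr: "\<And>s. cyc E U (rotate s D)" by (rule cyc_rot[OF cy])
  have km1: "?k - 1 < ?k" using cf(8) by simp
  show ?thesis
  proof (cases "\<exists>v\<in>U. card (Bc E \<phi> v) + card (Nb E U v) < \<Delta>")
    case True
    then obtain i where i: "i < ?k" "card (Bc E \<phi> (D ! i)) + card (Nb E U (D ! i)) < \<Delta>"
      using cf(2) by (metis in_set_conv_nth)
    have "rotate (Suc i) D ! (?k - 1) = D ! i"
      using rD[OF km1, of "Suc i"] i(1) cf(8) by simp
    then show ?thesis using case1[OF cyr[of "Suc i"]] i(2) lr by simp
  next
    case False
    then have T: "\<forall>v\<in>U. card (Bc E \<phi> v) + card (Nb E U v) = \<Delta>" using n_le by force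
    show ?thesis
    proof (cases "\<exists>i<?k. \<exists>c. c \<in> Bc E \<phi> (D ! i) \<and> c \<notin> Bc E \<phi> (D ! ?s i)")
      case True
      then obtain i c where i: "i < ?k" "c \<in> Bc E \<phi> (D ! i)" "c \<notin> Bc E \<phi> (D ! ?s i)" by blast
      have "rotate (Suc i) D ! (?k - 1) = D ! i"
        using rD[OF km1, of "Suc i"] i(1) cf(8) by simp
      moreover have "rotate (Suc i) D ! 0 = D ! ?s i" using rD[OF cf(8), of "Suc i"] by simp
      ultimately show ?thesis using casea[OF cyr[of "Suc i"], of c] i lr by simp
    next
      case False
      then have sub: "\<forall>i<?k. Bc E \<phi> (D ! i) \<subseteq> Bc E \<phi> (D ! ?s i)" by blast
      have sub2: "\<forall>i<?k - 1. Bc E \<phi> (D ! i) \<subseteq> Bc E \<phi> (D ! Suc i)"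
      proof (intro allI impI)
        fix i assume "i < ?k - 1"
        then have "i < ?k" "?s i = Suc i" by auto
        then show "Bc E \<phi> (D ! i) \<subseteq> Bc E \<phi> (D ! Suc i)" using sub by metis
      qed
      have last0: "Bc E \<phi> (D ! (?k - 1)) \<subseteq> Bc E \<phi> (D ! 0)"
      proof -
        have "?s (?k - 1) = 0" using cf(8) by simp
        then show ?thesis using sub km1 by metis
      qed
      define A0 where "A0 = Bc E \<phi> (D ! 0)"
      have Aeq: "\<forall>v\<in>U. Bc E \<phi> v = A0"
      proof
        fix v assume "v \<in> U"
        then obtain t where t: "t < ?k" "v = D ! t" using cf(2) by (metis in_set_conv_nth)
        have "Bc E \<phi> (D ! 0) \<subseteq> Bc E \<phi> (D ! (0 + t))"
          using chain_sub[OF sub2, of 0 t] t by simp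
        moreover have "Bc E \<phi> (D ! t) \<subseteq> Bc E \<phi> (D ! (t + (?k - 1 - t)))"
          using chain_sub[OF sub2, of t "?k - 1 - t"] t by simp
        moreover have "t + (?k - 1 - t) = ?k - 1" using t by simp
        ultimately show "Bc E \<phi> v = A0" using last0 t unfolding A0_def by auto
      qed
      have nbs: "\<And>t. t < ?k \<Longrightarrow> {D ! ?p t, D ! ?s t} \<subseteq> Nb E U (D ! t) \<and> D ! ?p t \<noteq> D ! ?s t"
      proof -
        fix t assume t: "t < ?k"
        have pl: "?p t < ?k" "?s t < ?k" using cf(8) by simp_all
        have "E (D ! ?p t) (D ! ?s (?p t))" using cf(7)[OF pl(1)] .
        then have "E (D ! t) (D ! ?p t)" using pred_mod[OF t] Esym by simp
        moreover have "E (D ! t) (D ! ?s t)" using cf(7)[OF t] .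
        moreover have "D ! ?p t \<noteq> D ! ?s t" using cf(4)[OF pl] pred_ne_suc[OF t cf(3)] by simp
        ultimately show "{D ! ?p t, D ! ?s t} \<subseteq> Nb E U (D ! t) \<and> D ! ?p t \<noteq> D ! ?s t"
          using cf(5) pl unfolding Nb_def by auto
      qed
      have card2: "\<And>t. t < ?k \<Longrightarrow> 2 \<le> card (Nb E U (D ! t))"
      proof -
        fix t assume t: "t < ?k"
        have "card {D ! ?p t, D ! ?s t} = 2" using nbs[OF t] by simp
        then show "2 \<le> card (Nb E U (D ! t))" using nbs[OF t] Nb_fin[OF finU] by (metis card_mono)
      qed
      have A0s: "A0 \<subseteq> {1..\<Delta>}" using Bc_sub[OF G P] unfolding A0_def by blast
      have cA: "card A0 + 2 \<le> \<Delta>" using T card2[OF cf(8)] Aeq cf(5)[OF cf(8)] by fastforce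
      have "card ({1..\<Delta>} - A0) = \<Delta> - card A0" using A0s by (simp add: card_Diff_subset finite_subset)
      then have cD: "card ({1..\<Delta>} - A0) \<ge> 2" using cA by simp
      then have "{1..\<Delta>} - A0 \<noteq> {}" by (metis card.empty not_numeral_le_zero)
      then obtain c1 where c1: "c1 \<in> {1..\<Delta>} - A0" by blast
      have "card ({1..\<Delta>} - A0 - {c1}) \<ge> 1" using cD c1 by (simp add: card_Diff_singleton)
      then have "{1..\<Delta>} - A0 - {c1} \<noteq> {}" by (metis card.empty not_one_le_zero)
      then obtain c2 where c2: "c2 \<in> {1..\<Delta>} - A0 - {c1}" by blast
      have c1A: "\<forall>v\<in>U. c1 \<notin> Bc E \<phi> v" using c1 Aeq by auto
      have c1r: "c1 \<in> {1..\<Delta>}" using c1 by auto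
      show ?thesis
      proof (cases "\<exists>i<?k. \<not> E (D ! ?p i) (D ! ?s i) \<and> (\<exists>u\<in>Nb E U (D ! i). u \<noteq> D ! ?p i \<and> u \<noteq> D ! ?s i)")
        case True
        then obtain i u where i: "i < ?k" "\<not> E (D ! ?p i) (D ! ?s i)" "u \<in> Nb E U (D ! i)"
          "u \<noteq> D ! ?p i" "u \<noteq> D ! ?s i" by blast
        let ?D = "rotate (?p i) D"
        have pl: "?p i < ?k" using cf(8) by simp
        have d0: "?D ! 0 = D ! ?p i" using rD[OF cf(8), of "?p i"] pl by simp
        have d1: "?D ! 1 = D ! i" using rD[OF cf(9), of "?p i"] pred_mod[OF i(1)] by simp
        have "\<And>p. (p + 2) mod ?k = Suc (Suc p mod ?k) mod ?k" by (simp add: mod_Suc_eq)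
        then have "(?p i + 2) mod ?k = Suc (Suc (?p i) mod ?k) mod ?k" by blast
        then have d2: "?D ! 2 = D ! ?s i" using rD[OF cf(10), of "?p i"] pred_mod[OF i(1)] by simp
        have "u \<in> set ?D" using i(3) cf(2) unfolding Nb_def by simp
        then obtain j where j: "j < ?k" "u = ?D ! j" by (metis in_set_conv_nth lr)
        have ui: "u \<noteq> D ! i" using i(3) Eirr unfolding Nb_def by auto
        have "j \<noteq> 0" "j \<noteq> 1" "j \<noteq> 2" by (rule notI, use ui j i(4,5) d0 d1 d2 in auto)+
        then have j3: "3 \<le> j" by simp
        have "E (?D ! 1) (?D ! j)" using d1 j i(3) unfolding Nb_def by simp
        then show ?thesis
          using caseb1[OF cyr[of "?p i"] j3 _ _ _ c1r] j(1) lr i(2) d0 d2 c1A cf(5) pl cf(10)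
          by (metis less_Suc_eq mod_less_divisor cf(8))
      next
        case False2: False
        show ?thesis
        proof (cases "\<forall>i<?k. E (D ! ?p i) (D ! ?s i)")
          case True
          obtain x y where xy: "x \<in> U" "y \<in> U" "x \<noteq> y" "\<not> E x y"
            using nc unfolding induced_complete_def by blast
          obtain a where a: "a < ?k" "x = D ! a" using xy(1) cf(2) by (metis in_set_conv_nth)
          let ?D = "rotate a D"
          have d0: "?D ! 0 = x" using rD[OF cf(8), of a] a by simp
          have "y \<in> set ?D" using xy(2) cf(2) by simp
          then obtain b where b: "b < ?k" "y = ?D ! b" by (metis in_set_conv_nth lr)
          have b0: "0 < b" using b xy(3) d0 by (cases b) auto
          define m where "m = (LEAST m. 0 < m \<and> m < ?k \<and> \<not> E (?D ! 0) (?D ! m))"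
          have ex: "0 < b \<and> b < ?k \<and> \<not> E (?D ! 0) (?D ! b)" using b b0 xy(4) d0 by simp
          have m: "0 < m" "m < ?k" "\<not> E (?D ! 0) (?D ! m)"
            using LeastI[of "\<lambda>m. 0 < m \<and> m < ?k \<and> \<not> E (?D ! 0) (?D ! m)", OF ex] unfolding m_def by auto
          have mmin: "\<And>n. 0 < n \<Longrightarrow> n < m \<Longrightarrow> E (?D ! 0) (?D ! n)"
          proof -
            fix n assume n: "0 < n" "n < m"
            show "E (?D ! 0) (?D ! n)"
            proof (rule ccontr)
              assume "\<not> E (?D ! 0) (?D ! n)"
              then have "m \<le> n" using n m(2) unfolding m_def by (intro Least_le) simp
              then show False using n by simp
            qed
          qed
          have e01: "E (?D ! 0) (?D ! 1)" using cyc_facts(6)[OF cyr[of a], of 0] cf(9) lr by simp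
          then have m2: "2 \<le> m" using m by (cases "m = 1") auto
          have em1: "E (?D ! 0) (?D ! (m - 1))" using mmin[of "m - 1"] m2 by simp
          have "a + (?k - 1) = a + ?k - 1" using cf(8) by linarith
          then have "?D ! (?k - 1) = D ! ?p a" using rD[OF km1, of a] by simp
          moreover have "?D ! 1 = D ! ?s a" using rD[OF cf(9), of a] by simp
          ultimately have ech: "E (?D ! (?k - 1)) (?D ! 1)" using True a(1) by simp
          have "?D ! m \<in> U" using m(2) cyc_facts(5)[OF cyr[of a]] lr by simp
          then show ?thesis
            using caseb2[OF cyr[of a] m2 _ m(3) em1 _ c1r] m(2) lr ech c1A d0 xy(1) by simp
        next
          case False
          then obtain i where i: "i < ?k" "\<not> E (D ! ?p i) (D ! ?s i)" by blast
          have Ni: "Nb E U (D ! i) \<subseteq> {D ! ?p i, D ! ?s i}" using False2 i by blast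
          have ci: "card (Nb E U (D ! i)) \<le> 2"
            using card_mono[OF _ Ni] card_insert_le by (metis card_2_iff finite.emptyI finite_insert nbs[OF i(1)])
          have NB2: "\<forall>t<?k. Nb E U (D ! t) \<subseteq> {D ! ?p t, D ! ?s t}"
          proof (intro allI impI)
            fix t assume t: "t < ?k"
            have "card (Nb E U (D ! t)) = card (Nb E U (D ! i))"
              using T Aeq cf(5)[OF t] cf(5)[OF i(1)] by (metis add_left_cancel)
            then have "card (Nb E U (D ! t)) \<le> card {D ! ?p t, D ! ?s t}" using ci nbs[OF t] by simp
            then show "Nb E U (D ! t) \<subseteq> {D ! ?p t, D ! ?s t}"
              using card_seteq[OF _ conjunct1[OF nbs[OF t]]] Nb_fin[OF finU] by blast
          qed
          show ?thesis
          proof (cases "even ?k")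
            case True
            have "c1 \<noteq> c2" "c2 \<in> {1..\<Delta>}" "\<forall>v\<in>U. c1 \<notin> Bc E \<phi> v \<and> c2 \<notin> Bc E \<phi> v"
              using c2 c1A Aeq by auto
            then show ?thesis using evencase[OF cy NB2 True _ c1r] by blast
          next
            case False
            then show ?thesis using oddcase[OF cy NB2] no by blast
          qed
        qed
      qed
    qed
  qed
qed

end



theorem lemma3p2:
  fixes V :: "'a set" and E :: "'a \<Rightarrow> 'a \<Rightarrow> bool" and C :: "'a list"
    and \<Delta> :: nat and \<phi> :: "'a \<Rightarrow> nat option"
  assumes "graph V E"
    and "\<Delta> > 0"
    and "removable V E C"
    and "max_degree_on_cycle V E C \<le> \<Delta>"
    and "partial_proper_coloring V E \<Delta> \<phi>"
    and "\<forall>v\<in>set C. \<phi> v = None"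
  shows "\<exists>\<phi>'. partial_proper_coloring V E \<Delta> \<phi>'
           \<and> (\<forall>u\<in>set C. \<phi>' u \<noteq> None)
           \<and> (\<forall>u\<in>V - set C. \<phi>' u = \<phi> u)"
proof -
  have sc: "simple_cycle V E C" and nc: "\<not> induced_complete E (set C)"
    and no: "\<not> induced_odd_cycle E (set C)"
    using assms(3) unfolding removable_def by auto
  have s: "length C > 2" "distinct C" "set C \<subseteq> V"
    "\<forall>i. Suc i < length C \<longrightarrow> E (C ! i) (C ! Suc i)" "E (last C) (hd C)"
    using sc unfolding simple_cycle_def by auto
  have ne: "C \<noteq> []" using s(1) by auto
  have cy: "cyc E (set C) C"
    unfolding cyc_def
  proof (intro conjI allI impI)
    fix i assume i: "i < length C"
    show "E (C ! i) (C ! (Suc i mod length C))"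
    proof (cases "Suc i < length C")
      case True then show ?thesis using s(4) by simp
    next
      case False
      then have si: "Suc i = length C" using i by simp
      then have "i = length C - 1" by simp
      then show ?thesis using s(5) ne si by (simp add: last_conv_nth hd_conv_nth)
    qed
  qed (use s in auto)
  have dg: "\<forall>v\<in>set C. degree V E v \<le> \<Delta>"
  proof
    fix v assume "v \<in> set C"
    then have "degree V E v \<le> Max (degree V E ` set C)" by (intro Max_ge) auto
    then show "degree V E v \<le> \<Delta>" using assms(4) unfolding max_degree_on_cycle_def by simp
  qed
  interpret setting V E \<Delta> \<phi> "set C"
    by unfold_locales (use assms(1,5,6) s(3) dg in auto)
  show ?thesis using main[OF cy nc no] .
qed

end
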